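(* Let $x,\tilde x\in(-\infty,0)$ and $y\in(x,0)$, and set $\Delta\vartheta=p_{0,-\infty}(\tilde x)-p_{0,-\infty}(x)$. Then $$p_{\tilde x,0}\Big(p_{\tilde x,1}^{-1}\big(p_{x,1}(y)+\Delta\vartheta\big)\Big)-p_{x,0}(y)=p_{1,-\infty}(\tilde x)-p_{1,-\infty}(x).$$
   Context: For real $p\neq q$ and $w$ strictly between $p$ and $q$ (oriented interval $(p,q)$, $p>q$ allowed), $p_{p,q}(w)=\ln\frac{w-p}{q-w}$, a bijection onto $\mathbb{R}$ with inverse $p_{p,q}^{-1}$; also $p_{p,-\infty}(w)=\ln|w-p|$ for $w<p$. *)

theory Defs
  imports "HOL-Analysis.Analysis"
begin

definition pmap :: "real \<Rightarrow> real \<Rightarrow> real \<Rightarrow> real" where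
  "pmap p q w = ln ((w - p) / (q - w))"

definition strictly_between :: "real \<Rightarrow> real \<Rightarrow> real \<Rightarrow> bool" where
  "strictly_between p q w \<longleftrightarrow> min p q < w \<and> w < max p q"

definition pinv :: "real \<Rightarrow> real \<Rightarrow> real \<Rightarrow> real" where
  "pinv p q t = (THE w. strictly_between p q w \<and> pmap p q w = t)"

definition pmap_minf :: "real \<Rightarrow> real \<Rightarrow> real" where
  "pmap_minf p w = ln \<bar>w - p\<bar>"

end

theory Submission
  imports Defs
begin

lemma pinv_eq:
  fixes a w t :: real
  assumes "a < w" "w < 1" "pmap a 1 w = t"
  shows "pinv a 1 t = w"
  unfolding pinv_def
proof (rule the_equality)
  show "strictly_between a 1 w \<and> pmap a 1 w = t"
    using assms by (simp add: strictly_between_def)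
next
  fix v assume h: "strictly_between a 1 v \<and> pmap a 1 v = t"
  have av: "a < v" "v < 1" using h assms by (auto simp: strictly_between_def)
  have "ln ((v - a) / (1 - v)) = ln ((w - a) / (1 - w))"
    using h assms by (simp add: pmap_def)
  hence "(v - a) / (1 - v) = (w - a) / (1 - w)"
    using av assms by (subst (asm) ln_inj_iff) auto
  hence "(v - a) * (1 - w) = (w - a) * (1 - v)"
    using av assms by (simp add: field_simps)
  hence "(v - w) * (1 - a) = 0" by (simp add: algebra_simps)
  thus "v = w" using assms by simp
qed

theorem proposition2p3:
  fixes x xt y :: real
  assumes "x < 0" and "xt < 0" and "x < y" and "y < 0"
  shows "pmap xt 0 (pinv xt 1 (pmap x 1 y + (pmap_minf 0 xt - pmap_minf 0 x))) - pmap x 0 y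
           = pmap_minf 1 xt - pmap_minf 1 x"
proof -
  define E where "E = (y - x) * xt / ((1 - y) * x)"
  have n1: "(y - x) * xt < 0" using assms by (simp add: mult_pos_neg)
  have n2: "(1 - y) * x < 0" using assms by (simp add: mult_pos_neg)
  have Epos: "E > 0" unfolding E_def using n1 n2 by (simp add: divide_neg_neg)
  define w where "w = (xt + E) / (1 + E)"
  have xtE: "xt + E = xt * y * (1 - x) / ((1 - y) * x)"
    unfolding E_def using assms by (simp add: field_simps)
  have n3: "xt * y * (1 - x) > 0" using assms by (simp add: mult_pos_pos mult_neg_neg)
  have xtEneg: "xt + E < 0" unfolding xtE using n3 n2 by (simp add: divide_pos_neg)
  have w1: "xt < w" unfolding w_def using Epos assms by (simp add: field_simps)
  have w2: "w < 0" unfolding w_def using Epos xtEneg by (simp add: divide_neg_pos)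
  have a1: "w - xt = E * (1 - xt) / (1 + E)" unfolding w_def using Epos
    by (simp add: field_simps)
  have a2: "1 - w = (1 - xt) / (1 + E)" unfolding w_def using Epos
    by (simp add: field_simps)
  have e1: "(w - xt) / (1 - w) = E" unfolding a1 a2 using Epos assms
    by (simp add: divide_simps)
  have t: "pmap x 1 y + (pmap_minf 0 xt - pmap_minf 0 x) = ln E"
  proof -
    have "E = ((y - x) / (1 - y)) * ((-xt) / (-x))" unfolding E_def by simp
    moreover have p1: "(y - x) / (1 - y) > 0" using assms by auto
    moreover have p2: "(-xt) / (-x) > 0" using assms by (intro divide_pos_pos) auto
    ultimately have "ln E = ln ((y - x) / (1 - y)) + ln ((-xt) / (-x))"
      using ln_mult_pos[OF p1 p2] by simp
    also have "ln ((-xt) / (-x)) = ln (-xt) - ln (-x)"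
      using assms by (intro ln_divide_pos) auto
    finally have "ln E = ln ((y - x) / (1 - y)) + (ln (-xt) - ln (-x))" .
    thus ?thesis using assms by (simp add: pmap_def pmap_minf_def)
  qed
  have pw: "pinv xt 1 (ln E) = w"
    by (rule pinv_eq) (use w1 w2 e1 in \<open>auto simp: pmap_def\<close>)
  have r: "(w - xt) / (0 - w) = (y - x) * (1 - xt) / (- y * (1 - x))"
  proof -
    have m: "0 - w = - (xt + E) / (1 + E)" unfolding w_def by (simp add: minus_divide_left)
    have "(w - xt) / (0 - w) = E * (1 - xt) / (- (xt + E))"
      unfolding a1 m using Epos xtEneg by (simp add: divide_simps)
    also have "\<dots> = (y - x) * (1 - xt) / (- y * (1 - x))"
      unfolding xtE unfolding E_def using assms by (simp add: divide_simps)
    finally show ?thesis .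
  qed
  have "pmap xt 0 w - pmap x 0 y = ln ((y - x) * (1 - xt) / (- y * (1 - x))) - ln ((y - x) / (0 - y))"
    unfolding pmap_def r[symmetric] by simp
  also have "\<dots> = ln (1 - xt) - ln (1 - x)"
  proof -
    have "(y - x) * (1 - xt) / (- y * (1 - x)) = ((y - x) / (0 - y)) * ((1 - xt) / (1 - x))"
      by simp
    moreover have q1: "(y - x) / (0 - y) > 0" using assms by (intro divide_pos_pos) auto
    moreover have q2: "(1 - xt) / (1 - x) > 0" using assms by auto
    ultimately show ?thesis using ln_mult_pos[OF q1 q2] ln_divide_pos[of "1 - xt" "1 - x"] assms by simp
  qed
  finally show ?thesis using assms t pw by (simp add: pmap_minf_def)
qed

end
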